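(* There is a constant $C>0$ such that for all $\alpha\in\mathbb R$, $\gamma\in[0,1)$, $\varepsilon>0$, and $N\sim N(0,1)$, $$\min\Big[(1-\gamma)e^{\frac{\alpha}{1-\gamma}}+2\gamma,\ (1+\gamma)e^{\frac{\alpha}{1+\gamma}}\Big]-\varepsilon^2\Big(C(1+\alpha^2)\max\{e^{\frac{\alpha}{1-\gamma}},e^{\frac{\alpha}{1+\gamma}}\}+6\gamma\Big)$$ $$\le\sqrt{2\pi}\,\varepsilon^{-2}\,E\Big[\exp(-\varepsilon^{-1}N)\big(N+\gamma|N|+\varepsilon\alpha\big)^+\Big]\le\max\Big[(1-\gamma)e^{\frac{\alpha}{1-\gamma}}+2\gamma,\ (1+\gamma)e^{\frac{\alpha}{1+\gamma}}\Big].$$ *)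

theory Defs
  imports "HOL-Probability.Probability"
begin

definition std_normal_expectation :: "(real \<Rightarrow> real) \<Rightarrow> real" where
  "std_normal_expectation g = (\<integral>x. std_normal_density x * g x \<partial>lborel)"

end

theory Submission imports Defs begin

definition E :: "nat \<Rightarrow> real \<Rightarrow> real" where "E i x = erlang_density 0 1 x * x^i"

lemma E_int: "has_bochner_integral lborel (E i) (fact i)"
  unfolding E_def
  apply (rule has_bochner_integral_nn_integral)
  using nn_integral_erlang_ith_moment[of 1 0 i]
  by (auto simp: erlang_density_def)

lemma E_eq: "E i s = (if s < 0 then 0 else exp (-s) * s^i)"
  by (simp add: E_def erlang_density_def)

lemma P_int: "has_bochner_integral lborel (\<lambda>t. exp(-t) * max 0 (t-c::real)) (exp(-c))"
proof -
  have "has_bochner_integral lborel (\<lambda>s. exp(-c::real) * E 1 s) (exp(-c) * fact 1)"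
    by (rule has_bochner_integral_mult_right[OF E_int])
  also have "(\<lambda>s. exp(-c) * E 1 s) = (\<lambda>s. (\<lambda>t. exp(-t) * max 0 (t-c)) (c + 1 * s))"
    by (auto simp: E_eq exp_diff exp_minus field_simps)
  finally show ?thesis
    using lborel_has_bochner_integral_real_affine_iff[of 1 "\<lambda>t. exp(-t) * max 0 (t-c)" "exp(-c)" c]
    by simp
qed

lemma Q_int: "has_bochner_integral lborel (\<lambda>t. t^2 * exp(-t) * max 0 (t-c::real)) (exp(-c) * (6 + 4*c + c^2))"
proof -
  have "has_bochner_integral lborel (\<lambda>s. exp(-c) * (E 3 s + 2*c * E 2 s + c^2 * E 1 s))
     (exp(-c) * (fact 3 + 2*c*fact 2 + c^2 * fact 1))"
    by (intro has_bochner_integral_mult_right has_bochner_integral_add E_int)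
  also have "(\<lambda>s. exp(-c) * (E 3 s + 2*c * E 2 s + c^2 * E 1 s)) = (\<lambda>s. (\<lambda>t. t^2 * exp(-t) * max 0 (t-c)) (c + 1 * s))"
    by (auto simp: E_eq exp_diff exp_minus field_simps power2_eq_square power3_eq_cube)
  also have "(fact 3 + 2*c*fact 2 + c^2 * fact 1 :: real) = 6 + 4*c + c^2"
    by (simp add: fact_numeral)
  finally show ?thesis
    using lborel_has_bochner_integral_real_affine_iff[of 1 "\<lambda>t. t^2 * exp(-t) * max 0 (t-c)" _ c]
    by simp
qed

lemma aux_eq: "(\<epsilon>::real) > 0 \<Longrightarrow> X = \<epsilon> * ((\<epsilon> / sqrt (2*pi)) * I) \<Longrightarrow> sqrt (2 * pi) * \<epsilon> powi (-2) * X = I"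
  by (simp add: power_int_minus field_simps power2_eq_square)

lemma subst_M:
  fixes \<alpha> \<gamma> \<epsilon> :: real assumes e: "\<epsilon> > 0"
  shows "sqrt (2 * pi) * \<epsilon> powi (-2) *
               std_normal_expectation
                 (\<lambda>n. exp (- n / \<epsilon>) * max 0 (n + \<gamma> * \<bar>n\<bar> + \<epsilon> * \<alpha>))
     = (\<integral>t. exp (-(\<epsilon>\<^sup>2 * t\<^sup>2 / 2)) * (exp (-t) * max 0 (t + \<gamma> * \<bar>t\<bar> + \<alpha>)) \<partial>lborel)"
proof -
  have "std_normal_expectation (\<lambda>n. exp (- n / \<epsilon>) * max 0 (n + \<gamma> * \<bar>n\<bar> + \<epsilon> * \<alpha>))
     = \<bar>\<epsilon>\<bar> *\<^sub>R (\<integral>x. (\<lambda>n. std_normal_density n * (exp (- n / \<epsilon>) * max 0 (n + \<gamma> * \<bar>n\<bar> + \<epsilon> * \<alpha>))) (0 + \<epsilon> * x) \<partial>lborel)"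
    unfolding std_normal_expectation_def
    by (rule lborel_integral_real_affine) (use e in simp)
  also have "\<dots> = \<epsilon> * (\<integral>x. (\<epsilon> / sqrt (2*pi)) * (exp (-(\<epsilon>\<^sup>2 * x\<^sup>2 / 2)) * (exp (-x) * max 0 (x + \<gamma> * \<bar>x\<bar> + \<alpha>))) \<partial>lborel)"
  proof -
    have "\<And>x. max 0 (\<epsilon> * x + \<gamma> * \<bar>\<epsilon> * x\<bar> + \<epsilon> * \<alpha>) = \<epsilon> * max 0 (x + \<gamma> * \<bar>x\<bar> + \<alpha>)"
      using e by (simp add: abs_mult max_mult_distrib_left algebra_simps)
    then have "\<And>x. (\<lambda>n. std_normal_density n * (exp (- n / \<epsilon>) * max 0 (n + \<gamma> * \<bar>n\<bar> + \<epsilon> * \<alpha>))) (0 + \<epsilon> * x)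
       = (\<epsilon> / sqrt (2*pi)) * (exp (-(\<epsilon>\<^sup>2 * x\<^sup>2 / 2)) * (exp (-x) * max 0 (x + \<gamma> * \<bar>x\<bar> + \<alpha>)))"
      using e by (simp add: std_normal_density_def power_mult_distrib)
    then show ?thesis using e by simp
  qed
  also have "\<dots> = \<epsilon> * ((\<epsilon> / sqrt (2*pi)) * (\<integral>x. exp (-(\<epsilon>\<^sup>2 * x\<^sup>2 / 2)) * (exp (-x) * max 0 (x + \<gamma> * \<bar>x\<bar> + \<alpha>)) \<partial>lborel))"
    by simp
  finally show ?thesis using e aux_eq by blast
qed

lemma main_bounds:
  fixes \<alpha> \<gamma> \<epsilon> :: real
  assumes g0: "0 \<le> \<gamma>" and g1: "\<gamma> < 1" and e: "\<epsilon> > 0"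
  defines "A \<equiv> (1 - \<gamma>) * exp (\<alpha> / (1 - \<gamma>)) + 2 * \<gamma>"
  defines "B \<equiv> (1 + \<gamma>) * exp (\<alpha> / (1 + \<gamma>))"
  defines "I \<equiv> (\<integral>t. exp (-(\<epsilon>\<^sup>2 * t\<^sup>2 / 2)) * (exp (-t) * max 0 (t + \<gamma> * \<bar>t\<bar> + \<alpha>)) \<partial>lborel)"
  shows "min A B - \<epsilon>\<^sup>2 * (8 * (1 + \<alpha>\<^sup>2) * max (exp (\<alpha> / (1 - \<gamma>))) (exp (\<alpha> / (1 + \<gamma>))) + 6 * \<gamma>) \<le> I \<and> I \<le> max A B"
proof -
  define h where "h t = exp (-t) * max 0 (t + \<gamma> * \<bar>t\<bar> + \<alpha>)" for t
  define w where "w t = exp (-(\<epsilon>\<^sup>2 * t\<^sup>2 / 2))" for t :: real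
  define c where "c = -\<alpha> / (1 + \<gamma>)"
  define g where "g t = (1 + \<gamma>) * (exp (-t) * max 0 (t - c))" for t
  define g2 where "g2 t = (1 + \<gamma>) * (t^2 * exp (-t) * max 0 (t - c))" for t
  have hI: "has_bochner_integral lborel h A \<or> has_bochner_integral lborel h B"
  proof (cases "\<alpha> \<ge> 0")
    case True
    define t0 where "t0 = -\<alpha> / (1 - \<gamma>)"
    have t0: "t0 \<le> 0" using True g1 by (simp add: t0_def)
    have eq: "h t = (1 - \<gamma>) * (exp (-t) * max 0 (t - t0)) + 2 * \<gamma> * (exp (-t) * max 0 (t - 0))" for t
    proof -
      have "max 0 (t + \<gamma> * \<bar>t\<bar> + \<alpha>) = (1 - \<gamma>) * max 0 (t - t0) + 2 * \<gamma> * max 0 t"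
      proof (cases "t \<ge> 0")
        case True
        have "\<gamma> * t \<le> t" using mult_right_mono[of \<gamma> 1 t] True g1 by simp
        then show ?thesis using t0 g0 g1 True \<open>\<alpha> \<ge> 0\<close> by (simp add: t0_def field_simps max_def)
      next
        case False
        have "(1 - \<gamma>) * (t - t0) = (1-\<gamma>) * t + \<alpha>" using g1 by (simp add: t0_def field_simps)
        have f: "t + \<gamma> * \<bar>t\<bar> + \<alpha> = (1 - \<gamma>) * (t - t0)" using False \<open>(1 - \<gamma>) * (t - t0) = (1-\<gamma>) * t + \<alpha>\<close>
          by (simp add: algebra_simps)
        show ?thesis
        proof (cases "t \<ge> t0")
          case True
          then have "0 \<le> (1 - \<gamma>) * (t - t0)" using g1 by simp
          then show ?thesis using f True False by (simp add: max_def)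
        next
          case F2: False
          then have "(1 - \<gamma>) * (t - t0) \<le> 0" using g1 by (simp add: mult_le_0_iff)
          then show ?thesis using f F2 False by (simp add: max_def)
        qed
      qed
      then show ?thesis unfolding h_def by (simp add: distrib_left mult.left_commute mult.commute)
    qed
    have "has_bochner_integral lborel (\<lambda>t. (1 - \<gamma>) * (exp (-t) * max 0 (t - t0)) + 2 * \<gamma> * (exp (-t) * max 0 (t - 0)))
        ((1 - \<gamma>) * exp (-t0) + 2 * \<gamma> * exp (-0))"
      by (intro has_bochner_integral_add has_bochner_integral_mult_right P_int)
    moreover have "(1 - \<gamma>) * exp (-t0) + 2 * \<gamma> * exp (-0) = A"
      by (simp add: A_def t0_def)
    moreover have "h = (\<lambda>t. (1 - \<gamma>) * (exp (-t) * max 0 (t - t0)) + 2 * \<gamma> * (exp (-t) * max 0 (t - 0)))"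
      using eq by (rule ext)
    ultimately show ?thesis by simp
  next
    case False
    have eq: "h t = g t" for t
    proof -
      have "max 0 (t + \<gamma> * \<bar>t\<bar> + \<alpha>) = (1 + \<gamma>) * max 0 (t - c)"
      proof (cases "t \<ge> 0")
        case True
        have "(1 + \<gamma>) * (t - c) = (1+\<gamma>) * t + \<alpha>" using g0 by (simp add: c_def field_simps)
        then have f: "t + \<gamma> * \<bar>t\<bar> + \<alpha> = (1 + \<gamma>) * (t - c)" using True by (simp add: algebra_simps)
        show ?thesis
        proof (cases "t \<ge> c")
          case True
          then have "0 \<le> (1 + \<gamma>) * (t - c)" using g0 by simp
          then show ?thesis using f True by (simp add: max_def)
        next
          case F2: False
          then have "(1 + \<gamma>) * (t - c) \<le> 0" using g0 by (simp add: mult_le_0_iff)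
          then show ?thesis using f F2 by (simp add: max_def)
        qed
      next
        case False
        have "c > 0" using \<open>\<not> \<alpha> \<ge> 0\<close> g0 by (simp add: c_def field_simps)
        moreover have "t + \<gamma> * \<bar>t\<bar> + \<alpha> \<le> 0" using False \<open>\<not> \<alpha> \<ge> 0\<close> g0 g1
        proof -
          have "(1 - \<gamma>) * t \<le> 0" using False g1 by (simp add: mult_le_0_iff)
          moreover have "t + \<gamma> * \<bar>t\<bar> + \<alpha> = (1 - \<gamma>) * t + \<alpha>" using False by (simp add: abs_if algebra_simps)
          ultimately show ?thesis using \<open>\<not> \<alpha> \<ge> 0\<close> by linarith
        qed
        ultimately show ?thesis using False g0 by (simp add: max_def)
      qed
      then show ?thesis by (simp add: h_def g_def)
    qed
    have "has_bochner_integral lborel g ((1 + \<gamma>) * exp (-c))"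
      unfolding g_def by (intro has_bochner_integral_mult_right P_int)
    moreover have "(1 + \<gamma>) * exp (-c) = B" by (simp add: B_def c_def)
    ultimately show ?thesis using eq by (metis ext)
  qed
  have gI: "has_bochner_integral lborel g B"
    unfolding g_def B_def
    using has_bochner_integral_mult_right[OF P_int[of c], of "1+\<gamma>"] by (simp add: c_def)
  have g2I: "has_bochner_integral lborel g2 ((1 + \<gamma>) * (exp (-c) * (6 + 4*c + c^2)))"
    unfolding g2_def by (intro has_bochner_integral_mult_right Q_int)
  have hint: "integrable lborel h" using hI by (auto simp: integrable.intros)
  have meas_w: "w \<in> borel_measurable lborel" unfolding w_def by measurable
  have w01: "0 \<le> w t" "w t \<le> 1" for t unfolding w_def by auto
  have h0: "0 \<le> h t" for t unfolding h_def by simp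
  have whint: "integrable lborel (\<lambda>t. w t * h t)"
    apply (rule Bochner_Integration.integrable_bound[OF hint])
    using meas_w borel_measurable_integrable[OF hint] apply measurable
  proof (rule AE_I2)
    fix x
    have "\<bar>w x * h x\<bar> = w x * h x" using w01[of x] h0[of x] by simp
    also have "\<dots> \<le> h x" using w01[of x] h0[of x] by (simp add: mult_left_le_one_le)
    finally show "norm (w x * h x) \<le> norm (h x)" using h0[of x] by simp
  qed
  have gint: "integrable lborel g" using gI by (auto simp: integrable.intros)
  have g2int: "integrable lborel g2" using g2I by (auto simp: integrable.intros)
  have gh: "g t \<le> h t" for t
  proof -
    have "(1 + \<gamma>) * max 0 (t - c) = max 0 ((1+\<gamma>) * t + \<alpha>)"
    proof -
      have "(1 + \<gamma>) * (t - c) = (1+\<gamma>) * t + \<alpha>" using g0 by (simp add: c_def field_simps)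
      moreover have "(1 + \<gamma>) * max 0 (t - c) = max 0 ((1 + \<gamma>) * (t - c))"
        using g0 by (simp add: max_mult_distrib_left)
      ultimately show ?thesis by simp
    qed
    also have "\<dots> \<le> max 0 (t + \<gamma> * \<bar>t\<bar> + \<alpha>)"
    proof -
      have "\<gamma> * t \<le> \<gamma> * \<bar>t\<bar>" using g0 by (simp add: mult_left_mono)
      then show ?thesis by (simp add: algebra_simps)
    qed
    finally show ?thesis by (simp add: g_def h_def mult.left_commute)
  qed
  have wg: "g t - \<epsilon>\<^sup>2 / 2 * g2 t \<le> w t * h t" for t
  proof -
    have "1 - \<epsilon>\<^sup>2 * t\<^sup>2 / 2 \<le> w t" unfolding w_def using exp_ge_add_one_self[of "-(\<epsilon>\<^sup>2 * t\<^sup>2 / 2)"] by simp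
    moreover have "0 \<le> g t" using g0 by (simp add: g_def)
    ultimately have "(1 - \<epsilon>\<^sup>2 * t\<^sup>2 / 2) * g t \<le> w t * g t" by (rule mult_right_mono)
    also have "\<dots> \<le> w t * h t" using gh w01 by (simp add: mult_left_mono)
    finally show ?thesis by (simp add: g_def g2_def algebra_simps)
  qed
  have Ieq: "I = (\<integral>t. w t * h t \<partial>lborel)" by (simp add: I_def w_def h_def)
  have up: "I \<le> integral\<^sup>L lborel h"
    unfolding Ieq using whint hint w01 h0 by (intro integral_mono) (auto intro!: mult_left_le_one_le)
  have "integral\<^sup>L lborel h \<le> max A B" using hI by (auto dest: has_bochner_integral_integral_eq)
  with up have upper: "I \<le> max A B" by simp
  have "B - \<epsilon>\<^sup>2 / 2 * ((1 + \<gamma>) * (exp (-c) * (6 + 4*c + c^2))) = (\<integral>t. g t - \<epsilon>\<^sup>2 / 2 * g2 t \<partial>lborel)"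
    by (rule has_bochner_integral_integral_eq[symmetric])
       (intro has_bochner_integral_diff has_bochner_integral_mult_right gI g2I)
  also have "\<dots> \<le> I" unfolding Ieq using gint g2int whint wg by (intro integral_mono) auto
  finally have low: "B - \<epsilon>\<^sup>2 / 2 * ((1 + \<gamma>) * (exp (-c) * (6 + 4*c + c^2))) \<le> I" .
  have cabs: "\<bar>c\<bar> \<le> \<bar>\<alpha>\<bar>" using g0 mult_left_mono[of 1 "1+\<gamma>" "\<bar>\<alpha>\<bar>"] by (simp add: c_def abs_div divide_le_eq)
  have "c^2 \<le> \<alpha>^2" using cabs by (metis abs_le_square_iff)
  moreover have "4 * c \<le> 2 + 2 * \<alpha>^2"
  proof -
    have "0 \<le> (\<bar>\<alpha>\<bar> - 1)^2" by simp
    then have "2 * \<bar>\<alpha>\<bar> \<le> 1 + \<alpha>^2" by (simp add: power2_diff power2_abs)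
    moreover have "c \<le> \<bar>\<alpha>\<bar>" using cabs by linarith
    ultimately show ?thesis by linarith
  qed
  moreover have "0 \<le> \<alpha>^2" by simp
  moreover have "8 * (1 + \<alpha>^2) = 8 + 8 * \<alpha>^2" by simp
  ultimately have p: "6 + 4*c + c^2 \<le> 8 * (1 + \<alpha>^2)" by linarith
  define X where "X = exp (-c) * (6 + 4*c + c^2)"
  define Mx where "Mx = max (exp (\<alpha> / (1 - \<gamma>))) (exp (\<alpha> / (1 + \<gamma>)))"
  have ex: "exp (-c) \<le> Mx" by (simp add: c_def Mx_def)
  have q0: "0 \<le> 6 + 4*c + c^2"
  proof -
    have "6 + 4*c + c^2 = (c+2)^2 + 2" by (simp add: power2_eq_square algebra_simps)
    moreover have "0 \<le> (c+2)^2" by simp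
    ultimately show ?thesis by linarith
  qed
  have "X \<le> Mx * (8 * (1 + \<alpha>^2))" unfolding X_def
    by (rule mult_mono[OF ex p]) (use q0 in \<open>auto simp: Mx_def le_max_iff_disj less_imp_le\<close>)
  moreover have "0 \<le> X" unfolding X_def using q0 by simp
  moreover have "(1 + \<gamma>) / 2 * X \<le> 1 * X" using g1 \<open>0 \<le> X\<close> by (intro mult_right_mono) auto
  ultimately have XY: "(1 + \<gamma>) / 2 * X \<le> 8 * (1 + \<alpha>\<^sup>2) * Mx" by (simp add: mult.commute)
  have "\<epsilon>\<^sup>2 / 2 * ((1 + \<gamma>) * X) = \<epsilon>\<^sup>2 * ((1 + \<gamma>) / 2 * X)" by simp
  also have "\<dots> \<le> \<epsilon>\<^sup>2 * (8 * (1 + \<alpha>\<^sup>2) * Mx)" using XY by (intro mult_left_mono) auto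
  also have "\<dots> \<le> \<epsilon>\<^sup>2 * (8 * (1 + \<alpha>\<^sup>2) * Mx + 6 * \<gamma>)" using g0 by (intro mult_left_mono) auto
  finally have "\<epsilon>\<^sup>2 / 2 * ((1 + \<gamma>) * (exp (-c) * (6 + 4*c + c^2))) \<le>
     \<epsilon>\<^sup>2 * (8 * (1 + \<alpha>\<^sup>2) * max (exp (\<alpha> / (1 - \<gamma>))) (exp (\<alpha> / (1 + \<gamma>))) + 6 * \<gamma>)"
    by (simp add: X_def Mx_def)
  with low have "min A B - \<epsilon>\<^sup>2 * (8 * (1 + \<alpha>\<^sup>2) * max (exp (\<alpha> / (1 - \<gamma>))) (exp (\<alpha> / (1 + \<gamma>))) + 6 * \<gamma>) \<le> I"
    by linarith
  with upper show ?thesis by simp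
qed

theorem lemma3p2:
  shows "\<exists>C::real. C > 0 \<and>
    (\<forall>(\<alpha>::real) (\<gamma>::real) (\<epsilon>::real). 0 \<le> \<gamma> \<longrightarrow> \<gamma> < 1 \<longrightarrow> \<epsilon> > 0 \<longrightarrow>
      (let A = (1 - \<gamma>) * exp (\<alpha> / (1 - \<gamma>)) + 2 * \<gamma>;
           B = (1 + \<gamma>) * exp (\<alpha> / (1 + \<gamma>));
           M = sqrt (2 * pi) * \<epsilon> powi (-2) *
               std_normal_expectation
                 (\<lambda>n. exp (- n / \<epsilon>) * max 0 (n + \<gamma> * \<bar>n\<bar> + \<epsilon> * \<alpha>))
       in min A B - \<epsilon>\<^sup>2 * (C * (1 + \<alpha>\<^sup>2) * max (exp (\<alpha> / (1 - \<gamma>))) (exp (\<alpha> / (1 + \<gamma>)))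
                              + 6 * \<gamma>) \<le> M
          \<and> M \<le> max A B))"
  apply (rule exI[of _ 8])
  apply (simp only: Let_def)
  using main_bounds subst_M by simp

end
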